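(* Let $a_1\neq 0$, $0<\varepsilon<1$, $T=1+\varepsilon$. Then the sets $\mathcal{U}_T(y,x_0)$, $(y,x_0)\in M^2$, are pairwise disjoint, and $$\bigcup_{(y,x_0)\in M^2}\mathcal{U}_T(y,x_0)=\{u\in L^2(0,1+\varepsilon):\ u|_{[1,1+\varepsilon]}\in W^{1,2}(1,1+\varepsilon),\ u(1+\varepsilon)=0\}.$$
   Context: Consider the scalar retarded control equation $\dot x(t)=a_1x(t-1)+u(t)$, $t\ge0$, with control $u\in L^2_{loc}(0,\infty)$ and initial data $x(0)=y$, $x(t)=x_0(t)$ for $t\in[-1,0)$, where $(y,x_0)\in M^2=\mathbb{R}\times L^2(-1,0)$. For every such initial state and control there is a unique continuous solution $x(t)=x(t;y,x_0,u)$ on $[0,\infty)$ (absolutely continuous, satisfying the equation a.e.). For $T>1$, the set of admissible controls $\mathcal{U}_T(y,x_0)$ is the set of $u\in L^2(0,T)$ such that $x(t;y,x_0,u)=0$ for all $t\in[T-1,T]$. *)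

theory Defs
  imports "HOL-Analysis.Analysis"
begin

definition L2_on :: "real set \<Rightarrow> (real \<Rightarrow> real) \<Rightarrow> bool" where
  "L2_on S f \<longleftrightarrow> f \<in> borel_measurable (lebesgue_on S) \<and>
                  integrable (lebesgue_on S) (\<lambda>s. (f s)^2)"

definition abs_cont_on :: "real set \<Rightarrow> (real \<Rightarrow> real) \<Rightarrow> bool" where
  "abs_cont_on S f \<longleftrightarrow>
     (\<forall>e>0. \<exists>d>0. \<forall>(n::nat) (a::nat \<Rightarrow> real) b.
        (\<forall>i<n. a i \<le> b i \<and> {a i..b i} \<subseteq> S) \<and>
        disjoint_family_on (\<lambda>i. {a i<..<b i}) {..<n} \<and>
        (\<Sum>i<n. b i - a i) < d
        \<longrightarrow> (\<Sum>i<n. \<bar>f (b i) - f (a i)\<bar>) < e)"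

definition is_solution ::
  "real \<Rightarrow> real \<Rightarrow> real \<Rightarrow> (real \<Rightarrow> real) \<Rightarrow> (real \<Rightarrow> real) \<Rightarrow> (real \<Rightarrow> real) \<Rightarrow> bool" where
  "is_solution a1 T y x0 u x \<longleftrightarrow>
     x 0 = y \<and> (\<forall>t\<in>{-1..<0}. x t = x0 t) \<and>
     continuous_on {0..T} x \<and> abs_cont_on {0..T} x \<and>
     (AE t in lebesgue_on {0..T}. (x has_real_derivative (a1 * x (t - 1) + u t)) (at t within {0..T}))"

definition admissible ::
  "real \<Rightarrow> real \<Rightarrow> real \<Rightarrow> (real \<Rightarrow> real) \<Rightarrow> (real \<Rightarrow> real) set" where
  "admissible a1 T y x0 =
     {u. L2_on {0..T} u \<and>
         (\<exists>x. is_solution a1 T y x0 u x \<and> (\<forall>t\<in>{T-1..T}. x t = 0))}"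

text \<open>u restricted to [a,b] lies in W^{1,2}(a,b), with continuous (absolutely continuous)
  representative v: v agrees with u a.e. on [a,b], and v has a derivative a.e. in L^2(a,b).\<close>
definition W12_repr :: "real \<Rightarrow> real \<Rightarrow> (real \<Rightarrow> real) \<Rightarrow> (real \<Rightarrow> real) \<Rightarrow> bool" where
  "W12_repr a b u v \<longleftrightarrow>
     abs_cont_on {a..b} v \<and> (AE t in lebesgue_on {a..b}. u t = v t) \<and>
     (\<exists>w. L2_on {a..b} w \<and>
          (AE t in lebesgue_on {a..b}. (v has_real_derivative w t) (at t within {a..b})))"

end

theory Submission
  imports Defs
begin


lemma lebesgue_on_interval_sets: "{a..b::real} \<in> sets lebesgue" by simp

lemma AE_on_iff:
  assumes "S \<in> sets lebesgue"
  shows "(AE t in lebesgue_on S. P t) \<longleftrightarrow> (\<exists>N. negligible N \<and> (\<forall>t\<in>S. t \<notin> N \<longrightarrow> P t))"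
proof -
  have "(AE t in lebesgue_on S. P t) \<longleftrightarrow> (AE t in lebesgue. t \<in> S \<longrightarrow> P t)"
    using assms by (simp add: AE_restrict_space_iff)
  also have "\<dots> \<longleftrightarrow> (\<exists>N. negligible N \<and> {t. \<not> (t \<in> S \<longrightarrow> P t)} \<subseteq> N)"
    by (rule eventually_ae_filter_negligible)
  finally show ?thesis by blast
qed

lemma AE_onI:
  assumes "S \<in> sets lebesgue" "negligible N" "\<And>t. t \<in> S \<Longrightarrow> t \<notin> N \<Longrightarrow> P t"
  shows "AE t in lebesgue_on S. P t"
  unfolding AE_on_iff[OF assms(1)] using assms(2,3) by blast

lemma AE_onE:
  assumes "S \<in> sets lebesgue" "AE t in lebesgue_on S. P t"
  obtains N where "negligible N" "\<And>t. t \<in> S \<Longrightarrow> t \<notin> N \<Longrightarrow> P t"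
  using assms(2) unfolding AE_on_iff[OF assms(1)] using that by blast

lemma negligible_shift: "negligible N \<Longrightarrow> negligible {t. t + c \<in> N}"
proof -
  assume "negligible N"
  then have "negligible ((+) (-c) ` N)" by (rule negligible_translation)
  moreover have "(+) (-c) ` N = {t. t + c \<in> N}"
  proof (intro set_eqI iffI)
    fix t assume "t \<in> (+) (-c) ` N" then show "t \<in> {t. t+c\<in>N}" by auto
  next
    fix t assume "t \<in> {t. t+c \<in> N}"
    then have "-c + (t+c) \<in> (+) (-c) ` N" by blast
    then show "t \<in> (+) (-c) ` N" by simp
  qed
  ultimately show ?thesis by simp
qed

definition ext :: "real set \<Rightarrow> (real \<Rightarrow> real) \<Rightarrow> real \<Rightarrow> real" where
  "ext S f s = indicator S s * f s"

lemma L2_iff: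
  assumes "S \<in> sets lebesgue"
  shows "L2_on S f \<longleftrightarrow> ext S f \<in> borel_measurable lebesgue \<and> integrable lebesgue (\<lambda>s. (ext S f s)^2)"
proof -
  have e: "(\<lambda>s. (ext S f s)^2) = (\<lambda>s. indicator S s *\<^sub>R (f s)^2)"
    by (auto simp: ext_def fun_eq_iff indicator_def)
  have m: "ext S f = (\<lambda>s. indicator S s *\<^sub>R f s)" by (auto simp: ext_def fun_eq_iff)
  have e3: "(\<lambda>s. (indicator S s * f s)^2) = (\<lambda>s. indicator S s * (f s)^2)"
    by (auto simp: fun_eq_iff indicator_def)
  have e4: "ext S f = (\<lambda>s. indicator S s * f s)" by (simp add: fun_eq_iff ext_def)
  have "f \<in> borel_measurable (lebesgue_on S) \<longleftrightarrow> ext S f \<in> borel_measurable lebesgue"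
    unfolding m by (rule borel_measurable_restrict_space_iff) (use assms in simp)
  moreover have "integrable (lebesgue_on S) (\<lambda>s. (f s)^2) \<longleftrightarrow> integrable lebesgue (\<lambda>s. (ext S f s)^2)"
    unfolding e by (rule integrable_restrict_space) (use assms in simp)
  ultimately show ?thesis unfolding L2_on_def by blast
qed

lemma L2_shift:
  assumes "L2_on {a..b} f"
  shows "L2_on {a-h..b-h} (\<lambda>t. f (t+h))"
proof -
  have e: "ext {a-h..b-h} (\<lambda>t. f (t+h)) = (\<lambda>x. ext {a..b} f (h + 1 * x))"
    by (auto simp: ext_def fun_eq_iff indicator_def add.commute)
  from assms have m: "ext {a..b} f \<in> borel_measurable lebesgue"
    and i: "integrable lebesgue (\<lambda>s. (ext {a..b} f s)^2)" by (auto simp: L2_iff)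
  have "(\<lambda>x. ext {a..b} f (h + 1 *\<^sub>R x)) \<in> borel_measurable lebesgue"
    by (rule borel_measurable_affine[OF m]) simp
  moreover have "integrable lebesgue (\<lambda>x. (ext {a..b} f (h + 1 * x))^2)"
    using lebesgue_integrable_real_affine[OF i, of 1 h] by simp
  ultimately show ?thesis by (simp add: L2_iff e)
qed

lemma L2_subset:
  assumes "L2_on S f" "T \<subseteq> S" "S \<in> sets lebesgue" "T \<in> sets lebesgue"
  shows "L2_on T f"
proof -
  have e: "ext T f = (\<lambda>s. indicator T s *\<^sub>R ext S f s)"
    using assms(2) by (auto simp: ext_def fun_eq_iff indicator_def)
  have e2: "(\<lambda>s. (ext T f s)^2) = (\<lambda>s. indicator T s *\<^sub>R (ext S f s)^2)"
    using assms(2) by (auto simp: ext_def fun_eq_iff indicator_def)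
  from assms(1,3) have m: "ext S f \<in> borel_measurable lebesgue"
    and i: "integrable lebesgue (\<lambda>s. (ext S f s)^2)" by (auto simp: L2_iff)
  have "integrable lebesgue (\<lambda>s. (ext T f s)^2)"
    unfolding e2 by (rule integrable_mult_indicator[OF assms(4) i])
  moreover have "ext T f \<in> borel_measurable lebesgue"
    unfolding e using borel_measurable_indicator[OF assms(4)] m by (rule borel_measurable_scaleR)
  ultimately show ?thesis using assms(4) by (simp add: L2_iff)
qed

lemma L2_cmult:
  assumes "L2_on S f" shows "L2_on S (\<lambda>s. c * f s)"
proof -
  have "(\<lambda>s. (c * f s)^2) = (\<lambda>s. c^2 * (f s)^2)" by (simp add: power_mult_distrib)
  moreover have "integrable (lebesgue_on S) (\<lambda>s. c^2 * (f s)^2)"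
    using assms unfolding L2_on_def by (intro integrable_mult_right) blast
  moreover have "(\<lambda>s. c * f s) \<in> borel_measurable (lebesgue_on S)"
    using assms unfolding L2_on_def by (intro borel_measurable_times borel_measurable_const) blast+
  ultimately show ?thesis unfolding L2_on_def by simp
qed

lemma L2_add:
  assumes "L2_on S f" "L2_on S g" shows "L2_on S (\<lambda>s. f s + g s)"
proof -
  have i1: "integrable (lebesgue_on S) (\<lambda>s. 2 * (f s)^2 + 2 * (g s)^2)"
    using assms unfolding L2_on_def by (intro Bochner_Integration.integrable_add integrable_mult_right) blast+
  have m2: "(\<lambda>s. f s + g s) \<in> borel_measurable (lebesgue_on S)"
    using assms unfolding L2_on_def by (intro borel_measurable_add) blast+
  then have i2: "(\<lambda>s. (f s + g s)^2) \<in> borel_measurable (lebesgue_on S)"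
    by (intro borel_measurable_power)
  have i3: "AE s in lebesgue_on S. norm ((f s + g s)^2) \<le> norm (2 * (f s)^2 + 2 * (g s)^2)"
  proof (rule AE_I2)
    fix s
    have "0 \<le> (f s - g s)^2" by simp
    then have "(f s + g s)^2 \<le> 2 * (f s)^2 + 2 * (g s)^2"
      by (simp add: power2_eq_square algebra_simps)
    then show "norm ((f s + g s)^2) \<le> norm (2 * (f s)^2 + 2 * (g s)^2)"
      by (simp add: abs_of_nonneg)
  qed
  have "integrable (lebesgue_on S) (\<lambda>s. (f s + g s)^2)"
    by (rule Bochner_Integration.integrable_bound[OF i1 i2 i3])
  then show ?thesis using m2 unfolding L2_on_def by blast
qed



definition ac_prop :: "real set \<Rightarrow> (real \<Rightarrow> real) \<Rightarrow> real \<Rightarrow> real \<Rightarrow> bool" where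
  "ac_prop S f e d \<longleftrightarrow> (\<forall>(n::nat) (a::nat \<Rightarrow> real) b.
        (\<forall>i<n. a i \<le> b i \<and> {a i..b i} \<subseteq> S) \<and>
        disjoint_family_on (\<lambda>i. {a i<..<b i}) {..<n} \<and>
        (\<Sum>i<n. b i - a i) < d
        \<longrightarrow> (\<Sum>i<n. \<bar>f (b i) - f (a i)\<bar>) < e)"

lemma ac_iff: "abs_cont_on S f \<longleftrightarrow> (\<forall>e>0. \<exists>d>0. ac_prop S f e d)"
  unfolding abs_cont_on_def ac_prop_def by (rule refl)

lemma ac_propD:
  fixes n :: nat and a b :: "nat \<Rightarrow> real"
  assumes "ac_prop S f e d" "\<And>i. i < n \<Longrightarrow> a i \<le> b i \<and> {a i..b i} \<subseteq> S"
     "disjoint_family_on (\<lambda>i. {a i<..<b i}) {..<n}" "(\<Sum>i<n. b i - a i) < d"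
  shows "(\<Sum>i<n. \<bar>f (b i) - f (a i)\<bar>) < e"
proof -
  have X: "(\<forall>i<n. a i \<le> b i \<and> {a i..b i} \<subseteq> S) \<and>
        disjoint_family_on (\<lambda>i. {a i<..<b i}) {..<n} \<and> (\<Sum>i<n. b i - a i) < d"
    using assms(2-4) by blast
  show ?thesis
    by (rule assms(1)[unfolded ac_prop_def, THEN spec[of _ n], THEN spec[of _ a], THEN spec[of _ b], THEN mp, OF X])
qed

lemma ac_propI:
  assumes "\<And>(n::nat) (a::nat\<Rightarrow>real) b. (\<And>i. i < n \<Longrightarrow> a i \<le> b i \<and> {a i..b i} \<subseteq> S) \<Longrightarrow>
     disjoint_family_on (\<lambda>i. {a i<..<b i}) {..<n} \<Longrightarrow> (\<Sum>i<n. b i - a i) < d \<Longrightarrow>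
     (\<Sum>i<n. \<bar>f (b i) - f (a i)\<bar>) < e"
  shows "ac_prop S f e d"
  unfolding ac_prop_def
proof (intro allI impI, elim conjE)
  fix n :: nat and a b :: "nat \<Rightarrow> real" assume h1: "\<forall>i<n. a i \<le> b i \<and> {a i..b i} \<subseteq> S"
    and h2: "disjoint_family_on (\<lambda>i. {a i<..<b i}) {..<n}" and h3: "(\<Sum>i<n. b i - a i) < d"
  show "(\<Sum>i<n. \<bar>f (b i) - f (a i)\<bar>) < e"
    by (rule assms[of n a b]) (use h1 h2 h3 in auto)
qed

lemma acE:
  assumes "abs_cont_on S f" "e > 0"
  obtains d where "d > 0" "ac_prop S f e d"
  using assms unfolding ac_iff by blast

lemma acI:
  assumes "\<And>e. e > 0 \<Longrightarrow> \<exists>d>0. ac_prop S f e d"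
  shows "abs_cont_on S f"
  using assms unfolding ac_iff by blast

lemma abs_cont_comp:
  assumes f: "abs_cont_on {p'..q'} f"
    and img: "\<And>t. t \<in> {p..q} \<Longrightarrow> \<phi> t \<in> {p'..q'}"
    and mon: "\<And>a b. p \<le> a \<Longrightarrow> a \<le> b \<Longrightarrow> b \<le> q \<Longrightarrow> \<phi> a \<le> \<phi> b \<and> \<phi> b - \<phi> a \<le> b - a"
  shows "abs_cont_on {p..q} (\<lambda>t. f (\<phi> t))"
proof (rule acI)
  fix e :: real assume "e > 0"
  then obtain d where d: "d > 0" and H: "ac_prop {p'..q'} f e d"
    by (rule acE[OF f])
  have "ac_prop {p..q} (\<lambda>t. f (\<phi> t)) e d"
  proof (rule ac_propI)
    fix n :: nat and a b :: "nat \<Rightarrow> real"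
    assume A1: "\<And>i. i < n \<Longrightarrow> a i \<le> b i \<and> {a i..b i} \<subseteq> {p..q}"
      and A2: "disjoint_family_on (\<lambda>i. {a i<..<b i}) {..<n}" and A3: "(\<Sum>i<n. b i - a i) < d"
    have ab: "\<And>i. i < n \<Longrightarrow> p \<le> a i \<and> a i \<le> b i \<and> b i \<le> q"
    proof -
      fix i assume "i < n"
      then have "a i \<le> b i" "{a i..b i} \<subseteq> {p..q}" using A1 by auto
      then show "p \<le> a i \<and> a i \<le> b i \<and> b i \<le> q" by auto
    qed
    have 1: "\<phi> (a i) \<le> \<phi> (b i) \<and> {\<phi> (a i)..\<phi> (b i)} \<subseteq> {p'..q'}" if i: "i < n" for i
    proof (intro conjI)
      have "p \<le> a i" "a i \<le> b i" "b i \<le> q" using ab[OF i] by auto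
      from mon[OF this] show "\<phi> (a i) \<le> \<phi> (b i)" by simp
      have "\<phi> (a i) \<in> {p'..q'}" "\<phi> (b i) \<in> {p'..q'}" using img ab[OF i] by auto
      then show "{\<phi> (a i)..\<phi> (b i)} \<subseteq> {p'..q'}" by auto
    qed
    have 2: "disjoint_family_on (\<lambda>i. {\<phi> (a i)<..<\<phi> (b i)}) {..<n}"
      unfolding disjoint_family_on_def
    proof (intro ballI impI)
      fix i j assume i: "i \<in> {..<n}" and j: "j \<in> {..<n}" and ij: "i \<noteq> j"
      have i': "i < n" and j': "j < n" using i j by auto
      show "{\<phi> (a i)<..<\<phi> (b i)} \<inter> {\<phi> (a j)<..<\<phi> (b j)} = {}"
      proof (rule ccontr)
        assume "{\<phi> (a i)<..<\<phi> (b i)} \<inter> {\<phi> (a j)<..<\<phi> (b j)} \<noteq> {}"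
        then obtain s where "s \<in> {\<phi> (a i)<..<\<phi> (b i)} \<inter> {\<phi> (a j)<..<\<phi> (b j)}" by blast
        then have s: "\<phi> (a i) < s" "s < \<phi> (b i)" "\<phi> (a j) < s" "s < \<phi> (b j)" by auto
        have ai: "a i < b i" using s(1,2) ab[OF i'] by (cases "a i = b i") auto
        have aj: "a j < b j" using s(3,4) ab[OF j'] by (cases "a j = b j") auto
        have dis: "{a i<..<b i} \<inter> {a j<..<b j} = {}"
          using A2 i j ij unfolding disjoint_family_on_def by blast
        have "b i \<le> a j \<or> b j \<le> a i"
        proof (rule ccontr)
          assume "\<not> (b i \<le> a j \<or> b j \<le> a i)"
          then have "(max (a i) (a j) + min (b i) (b j)) / 2 \<in> {a i<..<b i} \<inter> {a j<..<b j}"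
            using ai aj by auto
          then show False using dis by blast
        qed
        then show False
        proof
          assume h: "b i \<le> a j"
          have "p \<le> b i" "a j \<le> q" using ab[OF i'] ab[OF j'] by auto
          from mon[OF this(1) h this(2)] have "\<phi> (b i) \<le> \<phi> (a j)" by simp
          then show False using s by linarith
        next
          assume h: "b j \<le> a i"
          have "p \<le> b j" "a i \<le> q" using ab[OF i'] ab[OF j'] by auto
          from mon[OF this(1) h this(2)] have "\<phi> (b j) \<le> \<phi> (a i)" by simp
          then show False using s by linarith
        qed
      qed
    qed
    have "(\<Sum>i<n. \<phi> (b i) - \<phi> (a i)) \<le> (\<Sum>i<n. b i - a i)"
    proof (rule sum_mono)
      fix i assume "i \<in> {..<n}"
      then have "p \<le> a i" "a i \<le> b i" "b i \<le> q" using ab by auto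
      from mon[OF this] show "\<phi> (b i) - \<phi> (a i) \<le> b i - a i" by simp
    qed
    then have 3: "(\<Sum>i<n. \<phi> (b i) - \<phi> (a i)) < d" using A3 by linarith
    show "(\<Sum>i<n. \<bar>f (\<phi> (b i)) - f (\<phi> (a i))\<bar>) < e"
      using ac_propD[OF H 1 2 3] by simp
  qed
  then show "\<exists>d>0. ac_prop {p..q} (\<lambda>t. f (\<phi> t)) e d" using d by blast
qed

lemma abs_cont_cmult:
  assumes f: "abs_cont_on S f"
  shows "abs_cont_on S (\<lambda>t. c * f t)"
proof (rule acI)
  fix e :: real assume e: "e > 0"
  show "\<exists>d>0. ac_prop S (\<lambda>t. c * f t) e d"
  proof (cases "c = 0")
    case True
    have "ac_prop S (\<lambda>t. c * f t) e 1"
      by (rule ac_propI) (use True e in simp)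
    then show ?thesis by (intro exI[of _ 1]) simp
  next
    case False
    then have "e / \<bar>c\<bar> > 0" using e by simp
    then obtain d where d: "d > 0" and H: "ac_prop S f (e / \<bar>c\<bar>) d"
      by (rule acE[OF f])
    have "ac_prop S (\<lambda>t. c * f t) e d"
    proof (rule ac_propI)
      fix n :: nat and a b :: "nat \<Rightarrow> real"
      assume A1: "\<And>i. i < n \<Longrightarrow> a i \<le> b i \<and> {a i..b i} \<subseteq> S"
        and A2: "disjoint_family_on (\<lambda>i. {a i<..<b i}) {..<n}" and A3: "(\<Sum>i<n. b i - a i) < d"
      have "(\<Sum>i<n. \<bar>c * f (b i) - c * f (a i)\<bar>) = \<bar>c\<bar> * (\<Sum>i<n. \<bar>f (b i) - f (a i)\<bar>)"
        by (simp add: sum_distrib_left abs_mult right_diff_distrib[symmetric])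
      also have "\<dots> < \<bar>c\<bar> * (e / \<bar>c\<bar>)"
        using ac_propD[OF H A1 A2 A3] False by (intro mult_strict_left_mono) auto
      also have "\<dots> = e" using False by simp
      finally show "(\<Sum>i<n. \<bar>c * f (b i) - c * f (a i)\<bar>) < e" .
    qed
    then show ?thesis using d by blast
  qed
qed

lemma abs_cont_cong:
  assumes f: "abs_cont_on S f" and eq: "\<And>t. t \<in> S \<Longrightarrow> f t = g t"
  shows "abs_cont_on S g"
proof (rule acI)
  fix e :: real assume "e > 0"
  then obtain d where d: "d > 0" and H: "ac_prop S f e d"
    by (rule acE[OF f])
  have "ac_prop S g e d"
  proof (rule ac_propI)
    fix n :: nat and a b :: "nat \<Rightarrow> real"
    assume A1: "\<And>i. i < n \<Longrightarrow> a i \<le> b i \<and> {a i..b i} \<subseteq> S"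
      and A2: "disjoint_family_on (\<lambda>i. {a i<..<b i}) {..<n}" and A3: "(\<Sum>i<n. b i - a i) < d"
    have "(\<Sum>i<n. \<bar>g (b i) - g (a i)\<bar>) = (\<Sum>i<n. \<bar>f (b i) - f (a i)\<bar>)"
    proof (rule sum.cong)
      fix i assume "i \<in> {..<n}"
      then have "a i \<le> b i" "{a i..b i} \<subseteq> S" using A1 by auto
      then have "a i \<in> S" "b i \<in> S" by auto
      then show "\<bar>g (b i) - g (a i)\<bar> = \<bar>f (b i) - f (a i)\<bar>" using eq by simp
    qed simp
    then show "(\<Sum>i<n. \<bar>g (b i) - g (a i)\<bar>) < e" using ac_propD[OF H A1 A2 A3] by simp
  qed
  then show "\<exists>d>0. ac_prop S g e d" using d by blast
qed

lemma abs_cont_continuous: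
  assumes f: "abs_cont_on {p..q} f"
  shows "continuous_on {p..q} f"
  unfolding continuous_on_iff
proof (intro ballI allI impI)
  fix x e :: real assume x: "x \<in> {p..q}" and e: "e > 0"
  obtain d where d: "d > 0" and H: "ac_prop {p..q} f e d"
    by (rule acE[OF f e])
  show "\<exists>d>0. \<forall>x'\<in>{p..q}. dist x' x < d \<longrightarrow> dist (f x') (f x) < e"
  proof (intro exI[of _ d] conjI ballI impI d)
    fix x' assume x': "x' \<in> {p..q}" and dx: "dist x' x < d"
    define l where "l = min x x'"
    define r where "r = max x x'"
    have lr: "p \<le> l" "l \<le> r" "r \<le> q" using x x' unfolding l_def r_def by auto
    have 1: "(\<lambda>_. l) i \<le> (\<lambda>_. r) i \<and> {(\<lambda>_. l) i..(\<lambda>_. r) i} \<subseteq> {p..q}" if "i < (1::nat)" for i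
      using lr by auto
    have 2: "disjoint_family_on (\<lambda>i. {(\<lambda>_. l) i<..<(\<lambda>_. r) i}) {..<1::nat}"
      by (simp add: disjoint_family_on_def)
    have rl: "r - l = \<bar>x' - x\<bar>" unfolding l_def r_def by (simp add: abs_if max_def min_def)
    have 3: "(\<Sum>i<1::nat. (\<lambda>_. r) i - (\<lambda>_. l) i) < d"
      using dx rl by (simp add: dist_real_def)
    have "(\<Sum>i<1::nat. \<bar>f ((\<lambda>_. r) i) - f ((\<lambda>_. l) i)\<bar>) < e"
      by (rule ac_propD[OF H 1 2 3])
    then have "\<bar>f r - f l\<bar> < e" by simp
    moreover have "\<bar>f r - f l\<bar> = dist (f x') (f x)"
      unfolding l_def r_def by (cases "x \<le> x'") (simp_all add: dist_real_def abs_minus_commute max_def min_def)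
    ultimately show "dist (f x') (f x) < e" by simp
  qed
qed



lemma sol_deriv:
  assumes "is_solution a1 T y x0 u x"
  obtains N where "negligible N"
    "\<And>t. 0 < t \<Longrightarrow> t < T \<Longrightarrow> t \<notin> N \<Longrightarrow> (x has_real_derivative (a1 * x (t - 1) + u t)) (at t)"
proof -
  have AE: "AE t in lebesgue_on {0..T}. (x has_real_derivative (a1 * x (t - 1) + u t)) (at t within {0..T})"
    using assms unfolding is_solution_def by blast
  obtain N where N: "negligible N"
    and H: "\<And>t. t \<in> {0..T} \<Longrightarrow> t \<notin> N \<Longrightarrow> (x has_real_derivative (a1 * x (t - 1) + u t)) (at t within {0..T})"
    using AE_onE[OF lebesgue_on_interval_sets AE] by blast
  show ?thesis
  proof (rule that[OF N])
    fix t assume t: "0 < t" "t < T" "t \<notin> N"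
    have "at t within {0..T} = at t" by (rule at_within_interior) (use t in simp)
    then show "(x has_real_derivative (a1 * x (t - 1) + u t)) (at t)" using H[of t] t by simp
  qed
qed

lemma zero_deriv:
  assumes "\<And>s. s \<in> {p..q} \<Longrightarrow> x s = 0" "p < t" "t < q"
  shows "(x has_real_derivative 0) (at t)"
proof (rule has_field_derivative_transform_within_open[of "\<lambda>_. 0" 0 t "{p<..<q}"])
  show "((\<lambda>_. 0) has_real_derivative 0) (at t)" by simp
  show "open {p<..<q}" by simp
  show "t \<in> {p<..<q}" using assms by simp
  fix s assume "s \<in> {p<..<q}" then show "0 = x s" using assms(1)[of s] by simp
qed

lemma cont_ae_eq:
  fixes f g :: "real \<Rightarrow> real"
  assumes f: "continuous_on {a..b} f" and g: "continuous_on {a..b} g" and ab: "a < b"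
    and M: "negligible M" and eq: "\<And>t. t \<in> {a..b} \<Longrightarrow> t \<notin> M \<Longrightarrow> f t = g t"
  shows "\<And>t. t \<in> {a..b} \<Longrightarrow> f t = g t"
proof -
  have h: "continuous_on {a..b} (\<lambda>t. f t - g t)" using f g by (rule continuous_on_diff)
  then have h': "continuous_on {a<..<b} (\<lambda>t. f t - g t)" by (rule continuous_on_subset) auto
  define U where "U = {a<..<b} \<inter> (\<lambda>t. f t - g t) -` (- {0})"
  have "open U" unfolding U_def by (rule continuous_open_preimage[OF h']) auto
  moreover have "U \<subseteq> M"
  proof
    fix t assume "t \<in> U"
    then have "t \<in> {a..b}" "f t \<noteq> g t" unfolding U_def by auto
    then show "t \<in> M" using eq by blast
  qed
  then have "negligible U" using M by (rule negligible_subset[rotated])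
  ultimately have U: "U = {}" using open_not_negligible by blast
  define C where "C = {t \<in> {a..b}. (\<lambda>t. f t - g t) t = 0}"
  have "closed C" unfolding C_def by (rule continuous_closed_preimage_constant[OF h]) simp
  moreover have "{a<..<b} \<subseteq> C"
  proof
    fix t assume t: "t \<in> {a<..<b}"
    then have "t \<notin> U" using U by simp
    then show "t \<in> C" using t unfolding U_def C_def by auto
  qed
  ultimately have "closure {a<..<b} \<subseteq> C" by (rule closure_minimal[rotated])
  then have "{a..b} \<subseteq> C" using ab by simp
  then show "\<And>t. t \<in> {a..b} \<Longrightarrow> f t = g t" unfolding C_def by auto
qed



lemma zero_region:
  assumes e0: "0 < \<epsilon>" and sol: "is_solution a1 (1+\<epsilon>) y x0 u x"
    and z: "\<forall>t\<in>{1+\<epsilon>-1..1+\<epsilon>}. x t = 0"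
  obtains N where "negligible N"
    "\<And>t. 0 < t \<Longrightarrow> t < 1+\<epsilon> \<Longrightarrow> t \<notin> N \<Longrightarrow> (x has_real_derivative (a1 * x (t - 1) + u t)) (at t)"
    "\<And>t. \<epsilon> < t \<Longrightarrow> t < 1+\<epsilon> \<Longrightarrow> t \<notin> N \<Longrightarrow> a1 * x (t - 1) + u t = 0"
proof -
  obtain N where N: "negligible N"
    and D: "\<And>t. 0 < t \<Longrightarrow> t < 1+\<epsilon> \<Longrightarrow> t \<notin> N \<Longrightarrow> (x has_real_derivative (a1 * x (t - 1) + u t)) (at t)"
    using sol_deriv[OF sol] by blast
  have Z: "a1 * x (t - 1) + u t = 0" if t: "\<epsilon> < t" "t < 1+\<epsilon>" "t \<notin> N" for t
  proof -
    have z': "\<And>s. s \<in> {\<epsilon>..1+\<epsilon>} \<Longrightarrow> x s = 0" using z by simp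
    have "(x has_real_derivative 0) (at t)" by (rule zero_deriv[OF z']) (use t in auto)
    moreover have "0 < t" using t(1) e0 by linarith
    then have "(x has_real_derivative (a1 * x (t - 1) + u t)) (at t)" using D t by blast
    ultimately show ?thesis using DERIV_unique by metis
  qed
  show ?thesis by (rule that[OF N D Z])
qed

lemma sol_parts:
  assumes "is_solution a1 T y x0 u x"
  shows "x 0 = y" "\<And>t. t \<in> {-1..<0} \<Longrightarrow> x t = x0 t" "continuous_on {0..T} x" "abs_cont_on {0..T} x"
  using assms unfolding is_solution_def by blast+

lemma part1:
  assumes a1: "a1 \<noteq> 0" and e0: "0 < \<epsilon>" and e1: "\<epsilon> < 1"
    and u1: "u \<in> admissible a1 (1 + \<epsilon>) y x0" and u2: "u \<in> admissible a1 (1 + \<epsilon>) y' x0'"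
  shows "y = y' \<and> (AE s in lebesgue_on {-1..0}. x0 s = x0' s)"
proof -
  obtain x where sx: "is_solution a1 (1+\<epsilon>) y x0 u x" and zx: "\<forall>t\<in>{1+\<epsilon>-1..1+\<epsilon>}. x t = 0"
    using u1 unfolding admissible_def by blast
  obtain x' where sx': "is_solution a1 (1+\<epsilon>) y' x0' u x'" and zx': "\<forall>t\<in>{1+\<epsilon>-1..1+\<epsilon>}. x' t = 0"
    using u2 unfolding admissible_def by blast
  obtain N where N: "negligible N"
    and D: "\<And>t. 0 < t \<Longrightarrow> t < 1+\<epsilon> \<Longrightarrow> t \<notin> N \<Longrightarrow> (x has_real_derivative (a1 * x (t - 1) + u t)) (at t)"
    and Z: "\<And>t. \<epsilon> < t \<Longrightarrow> t < 1+\<epsilon> \<Longrightarrow> t \<notin> N \<Longrightarrow> a1 * x (t - 1) + u t = 0"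
    using zero_region[OF e0 sx zx] by blast
  obtain N' where N': "negligible N'"
    and D': "\<And>t. 0 < t \<Longrightarrow> t < 1+\<epsilon> \<Longrightarrow> t \<notin> N' \<Longrightarrow> (x' has_real_derivative (a1 * x' (t - 1) + u t)) (at t)"
    and Z': "\<And>t. \<epsilon> < t \<Longrightarrow> t < 1+\<epsilon> \<Longrightarrow> t \<notin> N' \<Longrightarrow> a1 * x' (t - 1) + u t = 0"
    using zero_region[OF e0 sx' zx'] by blast
  define M where "M = {s. s + 1 \<in> N} \<union> {s. s + 1 \<in> N'}"
  have M: "negligible M" unfolding M_def using negligible_shift[OF N] negligible_shift[OF N'] by (rule negligible_Un)
  have eqM: "x s = x' s" if s: "\<epsilon> - 1 < s" "s < \<epsilon>" "s \<notin> M" for s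
  proof -
    have "s + 1 \<notin> N" "s + 1 \<notin> N'" using s(3) unfolding M_def by auto
    then have "a1 * x (s + 1 - 1) + u (s+1) = 0" "a1 * x' (s + 1 - 1) + u (s+1) = 0"
      using Z[of "s+1"] Z'[of "s+1"] s by auto
    then have "a1 * x s = a1 * x' s" by (simp only: diff_add_cancel add_diff_cancel)
    then show ?thesis using a1 by simp
  qed
  have cx: "continuous_on {0..\<epsilon>} x"
    using sol_parts(3)[OF sx] by (rule continuous_on_subset) (use e1 in auto)
  have cx': "continuous_on {0..\<epsilon>} x'"
    using sol_parts(3)[OF sx'] by (rule continuous_on_subset) (use e1 in auto)
  have eq0: "x s = x' s" if "s \<in> {0..\<epsilon>}" for s
  proof (rule cont_ae_eq[OF cx cx' e0 M _ that])
    fix t assume t: "t \<in> {0..\<epsilon>}" "t \<notin> M"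
    show "x t = x' t"
    proof (cases "t = \<epsilon>")
      case True
      then show ?thesis using zx zx' e0 by simp
    next
      case False
      then show ?thesis using eqM[of t] t e1 by auto
    qed
  qed
  have "y = y'"
  proof -
    have "x 0 = y" "x' 0 = y'" using sol_parts(1)[OF sx] sol_parts(1)[OF sx'] by auto
    then show ?thesis using eq0[of 0] e0 by simp
  qed
  moreover have "AE s in lebesgue_on {-1..0}. x0 s = x0' s"
  proof (rule AE_onI[OF lebesgue_on_interval_sets])
    show "negligible (M \<union> {-1, \<epsilon> - 1, 0})" using M by (intro negligible_Un) auto
    fix s assume s: "s \<in> {-1..0}" "s \<notin> M \<union> {-1, \<epsilon> - 1, 0}"
    have "s \<in> {-1..<0}" using s by auto
    then have x0s: "x s = x0 s" "x' s = x0' s" using sol_parts(2)[OF sx] sol_parts(2)[OF sx'] by auto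
    show "x0 s = x0' s"
    proof (cases "s < \<epsilon> - 1")
      case False
      then have "\<epsilon> - 1 < s" using s by auto
      then have "x s = x' s" using eqM[of s] s e0 by auto
      then show ?thesis using x0s by simp
    next
      case True
      define t where "t = s + 1"
      have t: "0 < t" "t < \<epsilon>" "t < 1 + \<epsilon>" "t \<notin> N" "t \<notin> N'"
        using s True e0 unfolding t_def M_def by auto
      have d1: "(x has_real_derivative (a1 * x (t - 1) + u t)) (at t)" using D t by blast
      have d2: "(x' has_real_derivative (a1 * x' (t - 1) + u t)) (at t)" using D' t by blast
      have d1': "(x' has_real_derivative (a1 * x (t - 1) + u t)) (at t)"
      proof (rule has_field_derivative_transform_within_open[OF d1, of "{0<..<\<epsilon>}"])
        show "open {0<..<\<epsilon>}" by simp
        show "t \<in> {0<..<\<epsilon>}" using t by simp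
        fix r assume "r \<in> {0<..<\<epsilon>}" then show "x r = x' r" using eq0[of r] by simp
      qed
      have "a1 * x (t - 1) + u t = a1 * x' (t - 1) + u t" using DERIV_unique[OF d1' d2] .
      then have "x s = x' s" using a1 unfolding t_def by simp
      then show ?thesis using x0s by simp
    qed
  qed
  ultimately show ?thesis by blast
qed



lemma L2_shift2:
  assumes "L2_on {a..b} f"
  shows "L2_on {a+h..b+h} (\<lambda>t. f (t - h))"
proof -
  have "L2_on {a - (-h)..b - (-h)} (\<lambda>t. f (t + -h))" by (rule L2_shift[OF assms])
  then show ?thesis by simp
qed

lemma fwd:
  assumes a1: "a1 \<noteq> 0" and e0: "0 < \<epsilon>" and e1: "\<epsilon> < 1"
    and x0: "L2_on {-1..0} x0" and u: "u \<in> admissible a1 (1 + \<epsilon>) y x0"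
  shows "\<exists>v. W12_repr 1 (1 + \<epsilon>) u v \<and> v (1 + \<epsilon>) = 0"
proof -
  obtain x where sx: "is_solution a1 (1+\<epsilon>) y x0 u x" and zx: "\<forall>t\<in>{1+\<epsilon>-1..1+\<epsilon>}. x t = 0"
    using u unfolding admissible_def by blast
  have uL: "L2_on {0..1+\<epsilon>} u" using u unfolding admissible_def by blast
  obtain N where N: "negligible N"
    and D: "\<And>t. 0 < t \<Longrightarrow> t < 1+\<epsilon> \<Longrightarrow> t \<notin> N \<Longrightarrow> (x has_real_derivative (a1 * x (t - 1) + u t)) (at t)"
    and Z: "\<And>t. \<epsilon> < t \<Longrightarrow> t < 1+\<epsilon> \<Longrightarrow> t \<notin> N \<Longrightarrow> a1 * x (t - 1) + u t = 0"
    using zero_region[OF e0 sx zx] by blast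
  define v where "v = (\<lambda>t. (-a1) * x (t - 1))"
  define w where "w = (\<lambda>t. (-a1) * (a1 * x0 (t - 2) + u (t - 1)))"
  have "abs_cont_on {1..1+\<epsilon>} (\<lambda>t. x (t - 1))"
  proof (rule abs_cont_comp[OF sol_parts(4)[OF sx]])
    fix t :: real assume "t \<in> {1..1+\<epsilon>}" then show "t - 1 \<in> {0..1+\<epsilon>}" using e0 by auto
  next
    fix a b :: real assume "1 \<le> a" "a \<le> b" "b \<le> 1+\<epsilon>"
    then show "a - 1 \<le> b - 1 \<and> (b - 1) - (a - 1) \<le> b - a" by simp
  qed
  then have ac: "abs_cont_on {1..1+\<epsilon>} v" unfolding v_def by (rule abs_cont_cmult)
  have ae1: "AE t in lebesgue_on {1..1+\<epsilon>}. u t = v t"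
  proof (rule AE_onI[OF lebesgue_on_interval_sets])
    show "negligible (N \<union> {1+\<epsilon>})" using N by (intro negligible_Un) auto
    fix t assume t: "t \<in> {1..1+\<epsilon>}" "t \<notin> N \<union> {1+\<epsilon>}"
    then have "a1 * x (t - 1) + u t = 0" using Z[of t] e1 by auto
    then show "u t = v t" unfolding v_def by simp
  qed
  have L1: "L2_on {1..1+\<epsilon>} (\<lambda>t. x0 (t - 2))"
  proof (rule L2_subset[OF _ _ lebesgue_on_interval_sets lebesgue_on_interval_sets])
    show "L2_on {-1+2..0+2} (\<lambda>t. x0 (t - 2))" by (rule L2_shift2[OF x0])
    show "{1..1+\<epsilon>} \<subseteq> {-1+2..0+2::real}" using e1 by auto
  qed
  have L2: "L2_on {1..1+\<epsilon>} (\<lambda>t. u (t - 1))"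
  proof (rule L2_subset[OF _ _ lebesgue_on_interval_sets lebesgue_on_interval_sets])
    show "L2_on {0+1..(1+\<epsilon>)+1} (\<lambda>t. u (t - 1))" by (rule L2_shift2[OF uL])
    show "{1..1+\<epsilon>} \<subseteq> {0+1..(1+\<epsilon>)+1::real}" using e1 by auto
  qed
  have wL: "L2_on {1..1+\<epsilon>} w"
    unfolding w_def by (intro L2_cmult L2_add L1 L2)
  have ae2: "AE t in lebesgue_on {1..1+\<epsilon>}. (v has_real_derivative w t) (at t within {1..1+\<epsilon>})"
  proof (rule AE_onI[OF lebesgue_on_interval_sets])
    have nN: "negligible {t. t - 1 \<in> N}" using negligible_shift[OF N, of "-1"] by simp
    show "negligible ({t. t - 1 \<in> N} \<union> {1, 1+\<epsilon>})"
      using nN by (intro negligible_Un) auto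
    fix t assume t: "t \<in> {1..1+\<epsilon>}" "t \<notin> {t. t - 1 \<in> N} \<union> {1, 1+\<epsilon>}"
    then have t': "0 < t - 1" "t - 1 < 1 + \<epsilon>" "t - 1 \<notin> N" using e1 by auto
    have "(x has_real_derivative (a1 * x (t - 1 - 1) + u (t - 1))) (at (t + -1))"
      using D[OF t'] by simp
    then have "((\<lambda>s. x (s + -1)) has_real_derivative (a1 * x (t - 1 - 1) + u (t - 1))) (at t)"
      by (simp only: DERIV_shift)
    then have "((\<lambda>s. (-a1) * x (s + -1)) has_real_derivative (-a1) * (a1 * x (t - 1 - 1) + u (t - 1))) (at t)"
      by (rule DERIV_cmult)
    moreover have "t - 1 - 1 \<in> {-1..<0}" using t e1 by auto
    then have "x (t - 1 - 1) = x0 (t - 2)" using sol_parts(2)[OF sx] by simp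
    ultimately have "(v has_real_derivative w t) (at t)" unfolding v_def w_def by simp
    then show "(v has_real_derivative w t) (at t within {1..1+\<epsilon>})"
      by (rule has_field_derivative_at_within)
  qed
  have v1: "v (1 + \<epsilon>) = 0" unfolding v_def using zx e0 by simp
  have "W12_repr 1 (1 + \<epsilon>) u v" unfolding W12_repr_def using ac ae1 wL ae2 by blast
  then show ?thesis using v1 by blast
qed



lemma bwd:
  assumes a1: "a1 \<noteq> 0" and e0: "0 < \<epsilon>" and e1: "\<epsilon> < 1"
    and uL: "L2_on {0..1 + \<epsilon>} u" and W: "W12_repr 1 (1 + \<epsilon>) u v" and v1: "v (1 + \<epsilon>) = 0"
  shows "\<exists>y x0. L2_on {-1..0} x0 \<and> u \<in> admissible a1 (1 + \<epsilon>) y x0"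
proof -
  have ac: "abs_cont_on {1..1+\<epsilon>} v" using W unfolding W12_repr_def by blast
  have aeu: "AE t in lebesgue_on {1..1+\<epsilon>}. u t = v t" using W unfolding W12_repr_def by blast
  obtain w where wL: "L2_on {1..1+\<epsilon>} w"
    and aed: "AE t in lebesgue_on {1..1+\<epsilon>}. (v has_real_derivative w t) (at t within {1..1+\<epsilon>})"
    using W unfolding W12_repr_def by blast
  obtain Nu where Nu: "negligible Nu" and HU: "\<And>t. t \<in> {1..1+\<epsilon>} \<Longrightarrow> t \<notin> Nu \<Longrightarrow> u t = v t"
    using AE_onE[OF lebesgue_on_interval_sets aeu] by blast
  obtain Nd where Nd: "negligible Nd"
    and HD: "\<And>t. t \<in> {1..1+\<epsilon>} \<Longrightarrow> t \<notin> Nd \<Longrightarrow> (v has_real_derivative w t) (at t within {1..1+\<epsilon>})"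
    using AE_onE[OF lebesgue_on_interval_sets aed] by blast
  define wt where "wt = ext {1..1+\<epsilon>} w"
  define x0 where "x0 = (\<lambda>s. (-1/a1) * u (s + 1) + (-1/a1^2) * wt (s + 2))"
  define g where "g = (\<lambda>t. (-1/a1) * v (t + 1))"
  define x where "x = (\<lambda>t. if t < 0 then x0 t else if t \<le> \<epsilon> then g t else 0)"
  define y where "y = g 0"
  have Lu: "L2_on {-1..0} (\<lambda>s. u (s + 1))"
  proof -
    have "L2_on {0..1} u"
      by (rule L2_subset[OF uL _ lebesgue_on_interval_sets lebesgue_on_interval_sets]) (use e0 in auto)
    then have "L2_on {0-1..1-1} (\<lambda>s. u (s + 1))" by (rule L2_shift)
    then show ?thesis by simp
  qed
  have Lw: "L2_on {-1..0} (\<lambda>s. wt (s + 2))"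
  proof -
    have e: "ext {1..2} wt = ext {1..1+\<epsilon>} w"
      unfolding wt_def ext_def using e1 by (auto simp: fun_eq_iff indicator_def)
    have "L2_on {1..2} wt"
      using wL by (simp add: L2_iff e)
    then have "L2_on {1-2..2-2} (\<lambda>s. wt (s + 2))" by (rule L2_shift)
    then show ?thesis by simp
  qed
  have x0L: "L2_on {-1..0} x0" unfolding x0_def by (intro L2_add L2_cmult Lu Lw)
  have "abs_cont_on {0..1+\<epsilon>} (\<lambda>t. v (min t \<epsilon> + 1))"
  proof (rule abs_cont_comp[OF ac])
    fix t :: real assume "t \<in> {0..1+\<epsilon>}" then show "min t \<epsilon> + 1 \<in> {1..1+\<epsilon>}" using e0 by auto
  next
    fix a b :: real assume "0 \<le> a" "a \<le> b" "b \<le> 1+\<epsilon>"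
    then show "min a \<epsilon> + 1 \<le> min b \<epsilon> + 1 \<and> (min b \<epsilon> + 1) - (min a \<epsilon> + 1) \<le> b - a"
      by (auto simp: min_def)
  qed
  then have ach: "abs_cont_on {0..1+\<epsilon>} (\<lambda>t. (-1/a1) * v (min t \<epsilon> + 1))" by (rule abs_cont_cmult)
  have xh: "(-1/a1) * v (min t \<epsilon> + 1) = x t" if "t \<in> {0..1+\<epsilon>}" for t
  proof (cases "t \<le> \<epsilon>")
    case True then show ?thesis using that unfolding x_def g_def by auto
  next
    case False then show ?thesis using that v1 unfolding x_def g_def by (auto simp: add.commute)
  qed
  have acx: "abs_cont_on {0..1+\<epsilon>} x" by (rule abs_cont_cong[OF ach xh])
  have cx: "continuous_on {0..1+\<epsilon>} x" by (rule abs_cont_continuous[OF acx])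
  have xz: "x t = 0" if "t \<in> {\<epsilon>..1+\<epsilon>}" for t
  proof (cases "t = \<epsilon>")
    case True then show ?thesis using e0 v1 unfolding x_def g_def by (simp add: add.commute)
  next
    case False then show ?thesis using that e0 unfolding x_def by auto
  qed
  have aex: "AE t in lebesgue_on {0..1+\<epsilon>}. (x has_real_derivative (a1 * x (t - 1) + u t)) (at t within {0..1+\<epsilon>})"
  proof (rule AE_onI[OF lebesgue_on_interval_sets])
    have nNd: "negligible {t. t + 1 \<in> Nd}" by (rule negligible_shift[OF Nd])
    show "negligible (({t. t + 1 \<in> Nd} \<union> Nu) \<union> {0, \<epsilon>, 1, 1+\<epsilon>})"
      using nNd Nu by (intro negligible_Un) auto
    fix t assume t: "t \<in> {0..1+\<epsilon>}" "t \<notin> ({t. t + 1 \<in> Nd} \<union> Nu) \<union> {0, \<epsilon>, 1, 1+\<epsilon>}"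
    have tt: "0 < t" "t < 1+\<epsilon>" "t \<noteq> \<epsilon>" "t \<noteq> 1" "t + 1 \<notin> Nd" "t \<notin> Nu" using t by auto
    have "(x has_real_derivative (a1 * x (t - 1) + u t)) (at t)"
    proof (cases "t < \<epsilon>")
      case True
      have "(v has_real_derivative w (t+1)) (at (t+1) within {1..1+\<epsilon>})"
        by (rule HD) (use tt True in auto)
      moreover have "at (t+1) within {1..1+\<epsilon>} = at (t+1)"
        by (rule at_within_interior) (use tt True in simp)
      ultimately have "(v has_real_derivative w (t+1)) (at (t+1))" by simp
      then have "((\<lambda>s. v (s + 1)) has_real_derivative w (t+1)) (at t)" by (simp only: DERIV_shift)
      then have "(g has_real_derivative (-1/a1) * w (t+1)) (at t)"
        unfolding g_def by (rule DERIV_cmult)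
      then have dx: "(x has_real_derivative (-1/a1) * w (t+1)) (at t)"
      proof (rule has_field_derivative_transform_within_open[of _ _ _ "{0<..<\<epsilon>}"])
        show "open {0<..<\<epsilon>}" by simp
        show "t \<in> {0<..<\<epsilon>}" using tt True by simp
        fix s assume "s \<in> {0<..<\<epsilon>}" then show "g s = x s" unfolding x_def by simp
      qed
      have "t - 1 < 0" using True e1 by simp
      then have "x (t - 1) = x0 (t - 1)" unfolding x_def by simp
      moreover have "wt (t - 1 + 2) = w (t + 1)"
        unfolding wt_def ext_def using tt True by (simp add: indicator_def add.commute)
      ultimately have "a1 * x (t - 1) + u t = (-1/a1) * w (t+1)"
        unfolding x0_def using a1 by (simp add: field_simps power2_eq_square)
      then show ?thesis using dx by simp
    next
      case False
      then have te: "\<epsilon> < t" using tt by simp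
      have d0: "(x has_real_derivative 0) (at t)"
        by (rule zero_deriv[of \<epsilon> "1+\<epsilon>"]) (use xz tt te in auto)
      have "a1 * x (t - 1) + u t = 0"
      proof (cases "t < 1")
        case True
        have "x (t - 1) = x0 (t - 1)" unfolding x_def using True by simp
        moreover have "wt (t - 1 + 2) = 0"
          unfolding wt_def ext_def using te by (simp add: indicator_def)
        ultimately have "x (t - 1) = (-1/a1) * u t" unfolding x0_def by simp
        then show ?thesis using a1 by simp
      next
        case False
        then have t1: "1 < t" using tt by simp
        have "x (t - 1) = g (t - 1)" unfolding x_def using t1 tt by simp
        moreover have "u t = v t" by (rule HU) (use t1 tt in auto)
        ultimately show ?thesis unfolding g_def using a1 by simp
      qed
      then show ?thesis using d0 by simp
    qed
    then show "(x has_real_derivative (a1 * x (t - 1) + u t)) (at t within {0..1+\<epsilon>})"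
      by (rule has_field_derivative_at_within)
  qed
  have sol: "is_solution a1 (1+\<epsilon>) y x0 u x"
    unfolding is_solution_def
  proof (intro conjI ballI)
    show "x 0 = y" unfolding x_def y_def using e0 by simp
    fix t assume "t \<in> {-1..<0::real}" then show "x t = x0 t" unfolding x_def by simp
  qed (use cx acx aex in auto)
  have "\<forall>t\<in>{1+\<epsilon>-1..1+\<epsilon>}. x t = 0" using xz by simp
  then have "u \<in> admissible a1 (1 + \<epsilon>) y x0"
    unfolding admissible_def using uL sol by blast
  then show ?thesis using x0L by blast
qed


theorem mainTheorem2:
  fixes a1 \<epsilon> :: real
  assumes "a1 \<noteq> 0" and "0 < \<epsilon>" and "\<epsilon> < 1"
  shows "(\<forall>y x0 y' x0' u.
            L2_on {-1..0} x0 \<and> L2_on {-1..0} x0' \<and>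
            u \<in> admissible a1 (1 + \<epsilon>) y x0 \<and> u \<in> admissible a1 (1 + \<epsilon>) y' x0'
            \<longrightarrow> y = y' \<and> (AE s in lebesgue_on {-1..0}. x0 s = x0' s))
       \<and> (\<forall>u. L2_on {0..1 + \<epsilon>} u \<longrightarrow>
            ((\<exists>y x0. L2_on {-1..0} x0 \<and> u \<in> admissible a1 (1 + \<epsilon>) y x0) \<longleftrightarrow>
             (\<exists>v. W12_repr 1 (1 + \<epsilon>) u v \<and> v (1 + \<epsilon>) = 0)))"
proof (rule conjI; intro allI impI)
  fix y x0 y' x0' u
  assume h: "L2_on {-1..0} x0 \<and> L2_on {-1..0} x0' \<and>
            u \<in> admissible a1 (1 + \<epsilon>) y x0 \<and> u \<in> admissible a1 (1 + \<epsilon>) y' x0'"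
  show "y = y' \<and> (AE s in lebesgue_on {-1..0}. x0 s = x0' s)"
    by (rule part1[OF assms]) (use h in blast)+
next
  fix u assume uL: "L2_on {0..1 + \<epsilon>} u"
  show "(\<exists>y x0. L2_on {-1..0} x0 \<and> u \<in> admissible a1 (1 + \<epsilon>) y x0) \<longleftrightarrow>
             (\<exists>v. W12_repr 1 (1 + \<epsilon>) u v \<and> v (1 + \<epsilon>) = 0)"
  proof
    assume "\<exists>y x0. L2_on {-1..0} x0 \<and> u \<in> admissible a1 (1 + \<epsilon>) y x0"
    then obtain y x0 where "L2_on {-1..0} x0" "u \<in> admissible a1 (1 + \<epsilon>) y x0" by blast
    then show "\<exists>v. W12_repr 1 (1 + \<epsilon>) u v \<and> v (1 + \<epsilon>) = 0" by (rule fwd[OF assms])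
  next
    assume "\<exists>v. W12_repr 1 (1 + \<epsilon>) u v \<and> v (1 + \<epsilon>) = 0"
    then obtain v where "W12_repr 1 (1 + \<epsilon>) u v" "v (1 + \<epsilon>) = 0" by blast
    then show "\<exists>y x0. L2_on {-1..0} x0 \<and> u \<in> admissible a1 (1 + \<epsilon>) y x0"
      by (rule bwd[OF assms uL])
  qed
qed

end
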